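(* Let $\boldsymbol{S}_{\rm B},\boldsymbol{S}_{\rm W}\in\mathbb{R}^{M\times M}$ be the between-class and within-class scatter matrices of a labelled data set (defined in the context), with $\boldsymbol{S}_{\rm W}$ invertible, and let $\mathcal{R}(\boldsymbol{u})=\frac{\boldsymbol{u}^\top\boldsymbol{S}_{\rm B}\boldsymbol{u}}{\boldsymbol{u}^\top\boldsymbol{S}_{\rm W}\boldsymbol{u}}$ for nonzero $\boldsymbol{u}\in\mathbb{R}^M$. Let $\boldsymbol{u}_1,\ldots,\boldsymbol{u}_{n-1}$ ($2\le n\le M$) be the GO-LDA discriminant directions (defined in the context), and let $\boldsymbol{u}_n\in\mathbb{R}^M$ be a solution of $$\max_{\boldsymbol{u}}\ \mathcal{R}(\boldsymbol{u})\quad\text{s.t.}\quad\boldsymbol{u}\perp\boldsymbol{u}_i\ \text{ for all } i=1,\ldots,n-1.$$ Define $\boldsymbol{U}_{n-1}=(\boldsymbol{u}_1\ \cdots\ \boldsymbol{u}_{n-1})\in\mathbb{R}^{M\times(n-1)}$, let $\boldsymbol{B}_{n-1}\in\mathbb{R}^{(n-1)\times M}$ be the matrix whose $i$-th row is $\boldsymbol{u}_i^\top\boldsymbol{S}_{\rm W}^{-1}\boldsymbol{S}_{\rm B}$, and let $\boldsymbol{T}_{n-1}\in\mathbb{R}^{(n-1)\times(n-1)}$ have $(i,j)$ entry $\boldsymbol{u}_i^\top\boldsymbol{S}_{\rm W}^{-1}\boldsymbol{u}_j$. Then $\boldsymbol{u}_n$ is an eigenvector corresponding to the largest eigenvalue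 of the generalised eigenvalue problem $$\left(\boldsymbol{S}_{\rm B}-\boldsymbol{U}_{n-1}\boldsymbol{T}_{n-1}^{-1}\boldsymbol{B}_{n-1}\right)\boldsymbol{u}=\mu\boldsymbol{S}_{\rm W}\boldsymbol{u}.$$
   Context: Given $N$ samples $\boldsymbol{y}_1,\ldots,\boldsymbol{y}_N\in\mathbb{R}^M$ partitioned into $C$ classes, where class $j$ consists of samples $\boldsymbol{y}^j_1,\ldots,\boldsymbol{y}^j_{N_j}$. Let $\bar{\boldsymbol{y}}$ be the overall mean and $\bar{\boldsymbol{y}}_j$ the mean of class $j$. The between-class scatter is $\boldsymbol{S}_{\rm B}=\sum_{j=1}^C(\bar{\boldsymbol{y}}_j-\bar{\boldsymbol{y}})(\bar{\boldsymbol{y}}_j-\bar{\boldsymbol{y}})^\top$ and the within-class scatter is $\boldsymbol{S}_{\rm W}=\sum_{j=1}^C\sum_{k=1}^{N_j}(\boldsymbol{y}^j_k-\bar{\boldsymbol{y}}_j)(\boldsymbol{y}^j_k-\bar{\boldsymbol{y}}_j)^\top$, assumed invertible. GO-LDA discriminant directions are defined recursively: $\boldsymbol{u}_1$ is the (normalised) eigenvector corresponding to the largest eigenvalue of the generalised eigenvalue problem $\boldsymbol{S}_{\rm B}\boldsymbol{v}=\lambda\boldsymbol{S}_{\rm W}\boldsymbol{v}$; for $k\ge2$, $\boldsymbol{u}_k$ is a (normalised) maximiser of $\mathcal{R}(\boldsymbol{u})$ subject to $\boldsymbol{u}$ being orthogonal to each of $\boldsymbol{u}_1,\ldots,\boldsymbol{u}_{k-1}$.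 *)

theory Defs
  imports "Jordan_Normal_Form.Matrix"
begin

text \<open>Labelled data: C classes, class j (j < C) has Nc j samples y j k (k < Nc j),
  each a vector of dimension M.\<close>

definition class_mean :: "nat \<Rightarrow> (nat \<Rightarrow> nat) \<Rightarrow> (nat \<Rightarrow> nat \<Rightarrow> real vec) \<Rightarrow> nat \<Rightarrow> real vec" where
  "class_mean M Nc y j = vec M (\<lambda>a. (\<Sum>k<Nc j. y j k $ a) / real (Nc j))"

definition overall_mean :: "nat \<Rightarrow> nat \<Rightarrow> (nat \<Rightarrow> nat) \<Rightarrow> (nat \<Rightarrow> nat \<Rightarrow> real vec) \<Rightarrow> real vec" where
  "overall_mean M C Nc y = vec M (\<lambda>a. (\<Sum>j<C. \<Sum>k<Nc j. y j k $ a) / real (\<Sum>j<C. Nc j))"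

definition between_scatter :: "nat \<Rightarrow> nat \<Rightarrow> (nat \<Rightarrow> nat) \<Rightarrow> (nat \<Rightarrow> nat \<Rightarrow> real vec) \<Rightarrow> real mat" where
  "between_scatter M C Nc y = mat M M (\<lambda>(a,b). \<Sum>j<C.
      (class_mean M Nc y j $ a - overall_mean M C Nc y $ a) *
      (class_mean M Nc y j $ b - overall_mean M C Nc y $ b))"

definition within_scatter :: "nat \<Rightarrow> nat \<Rightarrow> (nat \<Rightarrow> nat) \<Rightarrow> (nat \<Rightarrow> nat \<Rightarrow> real vec) \<Rightarrow> real mat" where
  "within_scatter M C Nc y = mat M M (\<lambda>(a,b). \<Sum>j<C. \<Sum>k<Nc j.
      (y j k $ a - class_mean M Nc y j $ a) * (y j k $ b - class_mean M Nc y j $ b))"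

text \<open>Inverse of a square matrix (meaningful when the matrix is invertible).\<close>
definition minv :: "real mat \<Rightarrow> real mat" where
  "minv A = (SOME B. B \<in> carrier_mat (dim_row A) (dim_row A) \<and>
      A * B = 1\<^sub>m (dim_row A) \<and> B * A = 1\<^sub>m (dim_row A))"

definition rayleigh :: "real mat \<Rightarrow> real mat \<Rightarrow> real vec \<Rightarrow> real" where
  "rayleigh SB SW u = (u \<bullet> (SB *\<^sub>v u)) / (u \<bullet> (SW *\<^sub>v u))"

definition gen_eigenpair :: "nat \<Rightarrow> real mat \<Rightarrow> real mat \<Rightarrow> real \<Rightarrow> real vec \<Rightarrow> bool" where
  "gen_eigenpair M A B mu v \<longleftrightarrow> v \<in> carrier_vec M \<and> v \<noteq> 0\<^sub>v M \<and> A *\<^sub>v v = mu \<cdot>\<^sub>v (B *\<^sub>v v)"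

definition largest_gen_eigvec :: "nat \<Rightarrow> real mat \<Rightarrow> real mat \<Rightarrow> real vec \<Rightarrow> bool" where
  "largest_gen_eigvec M A B v \<longleftrightarrow>
     (\<exists>mu. gen_eigenpair M A B mu v \<and> (\<forall>mu' w. gen_eigenpair M A B mu' w \<longrightarrow> mu' \<le> mu))"

definition constrained_max :: "nat \<Rightarrow> real mat \<Rightarrow> real mat \<Rightarrow> real vec set \<Rightarrow> real vec \<Rightarrow> bool" where
  "constrained_max M SB SW W u \<longleftrightarrow>
     u \<in> carrier_vec M \<and> u \<noteq> 0\<^sub>v M \<and> (\<forall>w\<in>W. u \<bullet> w = 0) \<and>
     (\<forall>v. v \<in> carrier_vec M \<and> v \<noteq> 0\<^sub>v M \<and> (\<forall>w\<in>W. v \<bullet> w = 0)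
           \<longrightarrow> rayleigh SB SW v \<le> rayleigh SB SW u)"

text \<open>u 0, ..., u (m-1) are the first m GO-LDA directions (paper's u_1,...,u_m).\<close>
definition golda_dirs :: "nat \<Rightarrow> real mat \<Rightarrow> real mat \<Rightarrow> (nat \<Rightarrow> real vec) \<Rightarrow> nat \<Rightarrow> bool" where
  "golda_dirs M SB SW u m \<longleftrightarrow>
     (\<forall>i<m. u i \<in> carrier_vec M \<and> u i \<bullet> u i = 1 \<and>
        (i = 0 \<longrightarrow> largest_gen_eigvec M SB SW (u 0)) \<and>
        (0 < i \<longrightarrow> constrained_max M SB SW (u ` {..<i}) (u i)))"

end

theory Submission
  imports Defs "Jordan_Normal_Form.Determinant"
begin

lemma gram_quad:
  fixes f :: "'i \<Rightarrow> nat \<Rightarrow> real"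
  assumes x: "x \<in> carrier_vec M"
  shows "x \<bullet> (mat M M (\<lambda>(a,b). \<Sum>i\<in>I. f i a * f i b) *\<^sub>v x) = (\<Sum>i\<in>I. (\<Sum>a<M. f i a * x$a)^2)"
proof -
  have "x \<bullet> (mat M M (\<lambda>(a,b). \<Sum>i\<in>I. f i a * f i b) *\<^sub>v x)
     = (\<Sum>a<M. x$a * (\<Sum>b<M. (\<Sum>i\<in>I. f i a * f i b) * x$b))"
    using x by (simp add: scalar_prod_def row_def atLeast0LessThan)
  also have "\<dots> = (\<Sum>a<M. \<Sum>b<M. \<Sum>i\<in>I. (f i a * x$a) * (f i b * x$b))"
    by (simp add: sum_distrib_left sum_distrib_right mult_ac)
  also have "\<dots> = (\<Sum>a<M. \<Sum>i\<in>I. \<Sum>b<M. (f i a * x$a) * (f i b * x$b))"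
    by (rule sum.cong[OF refl], rule sum.swap)
  also have "\<dots> = (\<Sum>i\<in>I. \<Sum>a<M. \<Sum>b<M. (f i a * x$a) * (f i b * x$b))"
    by (rule sum.swap)
  also have "\<dots> = (\<Sum>i\<in>I. (\<Sum>a<M. f i a * x$a)^2)"
    by (simp add: power2_eq_square sum_product)
  finally show ?thesis .
qed

lemma gram_zero:
  fixes f :: "'i \<Rightarrow> nat \<Rightarrow> real"
  assumes x: "x \<in> carrier_vec M" and z: "\<forall>i\<in>I. (\<Sum>a<M. f i a * x$a) = 0"
  shows "mat M M (\<lambda>(a,b). \<Sum>i\<in>I. f i a * f i b) *\<^sub>v x = 0\<^sub>v M"
proof (rule eq_vecI)
  fix a assume a: "a < dim_vec (0\<^sub>v M :: real vec)"
  have "(mat M M (\<lambda>(a,b). \<Sum>i\<in>I. f i a * f i b) *\<^sub>v x) $ a = (\<Sum>b<M. (\<Sum>i\<in>I. f i a * f i b) * x$b)"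
    using x a by (simp add: scalar_prod_def row_def atLeast0LessThan)
  also have "\<dots> = (\<Sum>i\<in>I. f i a * (\<Sum>b<M. f i b * x$b))"
    unfolding sum_distrib_left sum_distrib_right by (subst sum.swap) (simp add: mult_ac)
  also have "\<dots> = 0" using z by simp
  finally show "(mat M M (\<lambda>(a,b). \<Sum>i\<in>I. f i a * f i b) *\<^sub>v x) $ a = 0\<^sub>v M $ a" using a by simp
qed (simp)

lemma gram_sym:
  fixes f :: "'i \<Rightarrow> nat \<Rightarrow> real"
  shows "transpose_mat (mat M M (\<lambda>(a,b). \<Sum>i\<in>I. f i a * f i b)) = mat M M (\<lambda>(a,b). \<Sum>i\<in>I. f i a * f i b)"
  by (rule eq_matI) (auto simp: mult.commute)

lemma quad_zero:
  fixes e k :: real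
  assumes "\<forall>t. 2*t*e + t^2*k \<le> 0"
  shows "e = 0"
proof -
  define K where "K = \<bar>k\<bar> + 1"
  have K: "K > 0" "2*K + k > 0" unfolding K_def by auto
  have "2*(e/K)*e + (e/K)^2*k \<le> 0" using assms by blast
  hence "(2*(e/K)*e + (e/K)^2*k) * K^2 \<le> 0" using K by (simp add: mult_nonpos_nonneg)
  moreover have "(2*(e/K)*e + (e/K)^2*k) * K^2 = e^2 * (2*K + k)" using K
    by (simp add: field_simps power2_eq_square)
  ultimately have "e^2 * (2*K+k) \<le> 0" by simp
  hence "e^2 \<le> 0" using K by (simp add: mult_le_0_iff)
  thus ?thesis by simp
qed

lemma SB_gram: "between_scatter M C Nc y = mat M M (\<lambda>(a,b). \<Sum>j\<in>{..<C}.
   (\<lambda>j a. class_mean M Nc y j $ a - overall_mean M C Nc y $ a) j a * (\<lambda>j a. class_mean M Nc y j $ a - overall_mean M C Nc y $ a) j b)"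
  unfolding between_scatter_def by simp

lemma SW_gram: "within_scatter M C Nc y = mat M M (\<lambda>(a,b). \<Sum>p\<in>Sigma {..<C} (\<lambda>j. {..<Nc j}).
   (\<lambda>p a. y (fst p) (snd p) $ a - class_mean M Nc y (fst p) $ a) p a * (\<lambda>p a. y (fst p) (snd p) $ a - class_mean M Nc y (fst p) $ a) p b)"
  unfolding within_scatter_def
  by (rule eq_matI) (auto simp: sum.Sigma split_def)


lemma sym_form:
  fixes A :: "real mat"
  assumes A: "A \<in> carrier_mat M M" and s: "transpose_mat A = A"
    and x: "x \<in> carrier_vec M" and y: "y \<in> carrier_vec M"
  shows "x \<bullet> (A *\<^sub>v y) = y \<bullet> (A *\<^sub>v x)"
proof -
  have "x \<bullet> (A *\<^sub>v y) = (transpose_mat A *\<^sub>v x) \<bullet> y"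
    using transpose_vec_mult_scalar[OF A y x] by simp
  also have "\<dots> = y \<bullet> (A *\<^sub>v x)" using s A x y by (simp add: comm_scalar_prod[of _ M])
  finally show ?thesis .
qed

lemma expand_form:
  fixes A :: "real mat"
  assumes A: "A \<in> carrier_mat M M" and s: "transpose_mat A = A"
    and x: "x \<in> carrier_vec M" and w: "w \<in> carrier_vec M"
  shows "(x + t \<cdot>\<^sub>v w) \<bullet> (A *\<^sub>v (x + t \<cdot>\<^sub>v w)) = x \<bullet> (A *\<^sub>v x) + 2*t*(w \<bullet> (A *\<^sub>v x)) + t^2*(w \<bullet> (A *\<^sub>v w))"
proof -
  have e1: "A *\<^sub>v (x + t \<cdot>\<^sub>v w) = A *\<^sub>v x + t \<cdot>\<^sub>v (A *\<^sub>v w)"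
    using A x w by (simp add: mult_add_distrib_mat_vec[OF A] mult_mat_vec[OF A])
  have "(x + t \<cdot>\<^sub>v w) \<bullet> (A *\<^sub>v x + t \<cdot>\<^sub>v (A *\<^sub>v w))
     = x \<bullet> (A *\<^sub>v x) + t * (x \<bullet> (A *\<^sub>v w)) + t * (w \<bullet> (A *\<^sub>v x)) + t*t*(w \<bullet> (A *\<^sub>v w))"
    using A x w
    by (simp add: add_scalar_prod_distrib[of _ M] scalar_prod_add_distrib[of _ M] algebra_simps)
  moreover have "x \<bullet> (A *\<^sub>v w) = w \<bullet> (A *\<^sub>v x)" by (rule sym_form[OF A s x w])
  ultimately show ?thesis unfolding e1 by (simp add: power2_eq_square algebra_simps)
qed

lemma mat_vec_zero:
  fixes A :: "real mat"
  assumes "A \<in> carrier_mat nr nc"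
  shows "A *\<^sub>v 0\<^sub>v nc = 0\<^sub>v nr"
  using assms by (intro eq_vecI) auto


lemma mv_carrier[simp]:
  "A \<in> carrier_mat nr nc \<Longrightarrow> A *\<^sub>v v \<in> carrier_vec nr"
  by (intro carrier_vecI) (auto dest: carrier_matD)

theorem theorem3:
  fixes M C n :: nat and Nc :: "nat \<Rightarrow> nat" and y :: "nat \<Rightarrow> nat \<Rightarrow> real vec"
    and SB SW :: "real mat" and u :: "nat \<Rightarrow> real vec"
  assumes samples: "\<forall>j<C. \<forall>k<Nc j. y j k \<in> carrier_vec M"
    and nonempty: "\<forall>j<C. 0 < Nc j"
    and SB_def: "SB = between_scatter M C Nc y"
    and SW_def: "SW = within_scatter M C Nc y"
    and SW_inv: "invertible_mat SW"
    and n: "2 \<le> n" "n \<le> M"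
    and dirs: "golda_dirs M SB SW u (n - 1)"
    and un: "constrained_max M SB SW (u ` {..<n - 1}) (u (n - 1))"
  shows "let U = mat M (n - 1) (\<lambda>(a, i). u i $ a);
             B = mat (n - 1) M (\<lambda>(i, a). u i \<bullet> col (minv SW * SB) a);
             T = mat (n - 1) (n - 1) (\<lambda>(i, j). u i \<bullet> (minv SW *\<^sub>v u j))
         in largest_gen_eigvec M (SB - U * minv T * B) SW (u (n - 1))"
proof -
  define m where "m = n - 1"
  define Wi where "Wi = minv SW"
  define U where "U = mat M m (\<lambda>(a, i). u i $ a)"
  define B where "B = mat m M (\<lambda>(i, a). u i \<bullet> col (Wi * SB) a)"
  define T where "T = mat m m (\<lambda>(i, j). u i \<bullet> (Wi *\<^sub>v u j))"
  define Ti where "Ti = minv T"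
  define Ut where "Ut = transpose_mat U"
  define P where "P = SB - U * Ti * B"
  have SBc: "SB \<in> carrier_mat M M" unfolding SB_def between_scatter_def by simp
  have SWc: "SW \<in> carrier_mat M M" unfolding SW_def within_scatter_def by simp
  have symB: "transpose_mat SB = SB" unfolding SB_def SB_gram by (rule gram_sym)
  have symW: "transpose_mat SW = SW" unfolding SW_def SW_gram by (rule gram_sym)
  have psdB: "0 \<le> x \<bullet> (SB *\<^sub>v x)" if x: "x \<in> carrier_vec M" for x
    unfolding SB_def SB_gram gram_quad[OF x] by (rule sum_nonneg) simp
  have psdW: "0 \<le> x \<bullet> (SW *\<^sub>v x)" if x: "x \<in> carrier_vec M" for x
    unfolding SW_def SW_gram gram_quad[OF x] by (rule sum_nonneg) simp
  obtain B0 where B0: "SW * B0 = 1\<^sub>m M" "B0 * SW = 1\<^sub>m (dim_row B0)"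
    using SW_inv SWc unfolding invertible_mat_def inverts_mat_def by auto
  have "dim_col (SW * B0) = M" using B0 by simp
  hence cB0: "dim_col B0 = M" by simp
  have "dim_col (B0 * SW) = dim_row B0" using B0 by simp
  hence rB0: "dim_row B0 = M" using SWc by simp
  have "\<exists>B. B \<in> carrier_mat (dim_row SW) (dim_row SW) \<and> SW * B = 1\<^sub>m (dim_row SW) \<and> B * SW = 1\<^sub>m (dim_row SW)"
    using B0 cB0 rB0 SWc by (intro exI[of _ B0]) auto
  from someI_ex[OF this] have Wi: "Wi \<in> carrier_mat M M" "SW * Wi = 1\<^sub>m M" "Wi * SW = 1\<^sub>m M"
    using SWc unfolding Wi_def minv_def by auto
  have WiSW: "Wi *\<^sub>v (SW *\<^sub>v x) = x" if x: "x \<in> carrier_vec M" for x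
  proof -
    have "Wi *\<^sub>v (SW *\<^sub>v x) = (Wi * SW) *\<^sub>v x" by (simp only: assoc_mult_mat_vec[OF Wi(1) SWc x])
    also have "\<dots> = x" unfolding Wi(3) using x by simp
    finally show ?thesis .
  qed
  have SWWi: "SW *\<^sub>v (Wi *\<^sub>v x) = x" if x: "x \<in> carrier_vec M" for x
  proof -
    have "SW *\<^sub>v (Wi *\<^sub>v x) = (SW * Wi) *\<^sub>v x" by (simp only: assoc_mult_mat_vec[OF SWc Wi(1) x])
    also have "\<dots> = x" unfolding Wi(2) using x by simp
    finally show ?thesis .
  qed
  have pdW0: "x = 0\<^sub>v M" if x: "x \<in> carrier_vec M" and z: "x \<bullet> (SW *\<^sub>v x) = 0" for x
  proof -
    let ?f = "\<lambda>p a. y (fst p) (snd p) $ a - class_mean M Nc y (fst p) $ a"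
    let ?I = "Sigma {..<C} (\<lambda>j. {..<Nc j})"
    have fin: "finite ?I" by auto
    have s0: "(\<Sum>i\<in>?I. (\<Sum>a<M. ?f i a * x$a)^2) = 0"
      using z unfolding SW_def SW_gram gram_quad[OF x] .
    have nn: "\<And>i. i \<in> ?I \<Longrightarrow> 0 \<le> (\<Sum>a<M. ?f i a * x$a)^2" by simp
    have "\<forall>i\<in>?I. (\<Sum>a<M. ?f i a * x$a)^2 = 0"
      using iffD1[OF sum_nonneg_eq_0_iff[OF fin nn] s0] .
    hence "\<forall>i\<in>?I. (\<Sum>a<M. ?f i a * x$a) = 0" by simp
    from gram_zero[OF x this] have sw0: "SW *\<^sub>v x = 0\<^sub>v M" unfolding SW_def SW_gram .
    have "x = Wi *\<^sub>v (SW *\<^sub>v x)" using WiSW[OF x] by simp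
    also have "\<dots> = Wi *\<^sub>v 0\<^sub>v M" unfolding sw0 ..
    also have "\<dots> = 0\<^sub>v M" by (rule mat_vec_zero[OF Wi(1)])
    finally show ?thesis .
  qed
  have pdW: "0 < x \<bullet> (SW *\<^sub>v x)" if x: "x \<in> carrier_vec M" and nz: "x \<noteq> 0\<^sub>v M" for x
  proof -
    have "x \<bullet> (SW *\<^sub>v x) \<noteq> 0" using pdW0[OF x] nz by blast
    thus ?thesis using psdW[OF x] by linarith
  qed
  have mn: "m < n" "n - 1 = m" unfolding m_def using n by auto
  have uc: "u i \<in> carrier_vec M" if "i < n" for i
  proof (cases "i < m")
    case True
    thus ?thesis using dirs unfolding golda_dirs_def m_def by auto
  next
    case False
    hence "i = m" using that mn by auto
    thus ?thesis using un unfolding constrained_max_def m_def by simp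
  qed
  have norm1: "u i \<bullet> u i = 1" if "i < m" for i
    using dirs that unfolding golda_dirs_def m_def by auto
  have orth0: "u j \<bullet> u i = 0" if ij: "i < j" "j < n" for i j
  proof (cases "j = m")
    case True
    thus ?thesis using un ij unfolding constrained_max_def m_def by auto
  next
    case False
    hence "j < n - 1" using ij unfolding m_def by auto
    hence "constrained_max M SB SW (u ` {..<j}) (u j)" using dirs ij unfolding golda_dirs_def by auto
    thus ?thesis using ij unfolding constrained_max_def by auto
  qed
  have orth: "u i \<bullet> u j = (if i = j then 1 else 0)" if "i < m" "j < m" for i j
  proof -
    consider "i = j" | "i < j" | "j < i" by linarith
    thus ?thesis
    proof cases
      case 1 thus ?thesis using norm1 that by simp
    next
      case 2 thus ?thesis using orth0[of i j] that mn uc[of i] uc[of j] comm_scalar_prod[of "u i" M "u j"] by auto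
    next
      case 3 thus ?thesis using orth0[of j i] that mn by auto
    qed
  qed
  have v0perp: "u m \<bullet> u i = 0" if "i < m" for i using orth0[of i m] that mn by auto
  have Uc: "U \<in> carrier_mat M m" unfolding U_def by simp
  have Utc: "Ut \<in> carrier_mat m M" unfolding Ut_def using Uc by simp
  have colU: "col U i = u i" if "i < m" for i
    using uc[of i] that mn unfolding U_def by (intro eq_vecI) auto
  have rowUt: "row Ut i = u i" if "i < m" for i
    using colU[OF that] that Uc unfolding Ut_def by simp
  have Utv: "(Ut *\<^sub>v x) $ i = u i \<bullet> x" if "i < m" for i x
    using that rowUt Utc by simp
  have Ut0: "Ut *\<^sub>v x = 0\<^sub>v m \<longleftrightarrow> (\<forall>i<m. x \<bullet> u i = 0)" if x: "x \<in> carrier_vec M" for x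
  proof -
    have "u i \<bullet> x = x \<bullet> u i" if "i < m" for i
      using comm_scalar_prod[of "u i" M x] uc[of i] x that mn by simp
    moreover have "Ut *\<^sub>v x = 0\<^sub>v m \<longleftrightarrow> (\<forall>i<m. (Ut *\<^sub>v x) $ i = 0)"
    proof
      assume h: "Ut *\<^sub>v x = 0\<^sub>v m"
      show "\<forall>i<m. (Ut *\<^sub>v x) $ i = 0"
      proof (intro allI impI)
        fix i assume i: "i < m"
        have "(Ut *\<^sub>v x) $ i = (0\<^sub>v m :: real vec) $ i" using h by (rule arg_cong)
        thus "(Ut *\<^sub>v x) $ i = 0" using i by (simp del: index_mult_mat_vec)
      qed
    next
      assume "\<forall>i<m. (Ut *\<^sub>v x) $ i = 0"
      thus "Ut *\<^sub>v x = 0\<^sub>v m" using Utc by (intro eq_vecI) (auto simp del: index_mult_mat_vec)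
    qed
    ultimately show ?thesis using Utv by auto
  qed
  have xperp: "x \<bullet> (U *\<^sub>v c) = 0" if x: "x \<in> carrier_vec M" and "Ut *\<^sub>v x = 0\<^sub>v m"
     and c: "c \<in> carrier_vec m" for x c
  proof -
    have "(transpose_mat U *\<^sub>v x) \<bullet> c = x \<bullet> (U *\<^sub>v c)" by (rule transpose_vec_mult_scalar[OF Uc c x])
    thus ?thesis using that c unfolding Ut_def by simp
  qed
  have Beq: "B = Ut * (Wi * SB)"
    using Utc Wi SBc rowUt unfolding B_def by (intro eq_matI) auto
  have Teq: "T = Ut * (Wi * U)"
    using Utc Wi Uc rowUt colU unfolding T_def by (intro eq_matI) (auto simp: mult_mat_vec_def)
  have Bc: "B \<in> carrier_mat m M" unfolding B_def by simp
  have Tc: "T \<in> carrier_mat m m" unfolding T_def by simp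
  have Tv: "T *\<^sub>v c = Ut *\<^sub>v (Wi *\<^sub>v (U *\<^sub>v c))" if c: "c \<in> carrier_vec m" for c
  proof -
    have "Wi * U \<in> carrier_mat M m" using Wi(1) Uc by (rule mult_carrier_mat)
    hence "Ut * (Wi * U) *\<^sub>v c = Ut *\<^sub>v ((Wi * U) *\<^sub>v c)" by (rule assoc_mult_mat_vec[OF Utc _ c])
    also have "(Wi * U) *\<^sub>v c = Wi *\<^sub>v (U *\<^sub>v c)" by (rule assoc_mult_mat_vec[OF Wi(1) Uc c])
    finally show ?thesis unfolding Teq .
  qed
  have Tker: "c = 0\<^sub>v m" if c: "c \<in> carrier_vec m" and Tc0: "T *\<^sub>v c = 0\<^sub>v m" for c
  proof -
    define z where "z = U *\<^sub>v c"
    define w where "w = Wi *\<^sub>v z"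
    have zc: "z \<in> carrier_vec M" unfolding z_def using Uc by simp
    have wc: "w \<in> carrier_vec M" unfolding w_def using Wi by simp
    have "(transpose_mat Ut *\<^sub>v c) \<bullet> w = c \<bullet> (Ut *\<^sub>v w)" by (rule transpose_vec_mult_scalar[OF Utc wc c])
    moreover have "Ut *\<^sub>v w = 0\<^sub>v m" using Tc0 Tv[OF c] unfolding w_def z_def by simp
    ultimately have "z \<bullet> w = 0" using c unfolding z_def Ut_def by simp
    moreover have "z = SW *\<^sub>v w" unfolding w_def using SWWi[OF zc] by simp
    ultimately have "w \<bullet> (SW *\<^sub>v w) = 0" using comm_scalar_prod[of w M "SW *\<^sub>v w"] wc SWc by simp
    hence "w = 0\<^sub>v M" using pdW0 wc by blast
    hence z0: "z = 0\<^sub>v M" using \<open>z = SW *\<^sub>v w\<close> SWc mat_vec_zero by simp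
    show ?thesis
    proof (rule eq_vecI)
      fix j assume "j < dim_vec (0\<^sub>v m :: real vec)"
      hence j: "j < m" by simp
      have ue: "Ut *\<^sub>v u j = unit_vec m j"
        using Utc j orth rowUt by (intro eq_vecI) (auto simp: unit_vec_def)
      have "(transpose_mat U *\<^sub>v u j) \<bullet> c = u j \<bullet> (U *\<^sub>v c)"
        by (rule transpose_vec_mult_scalar[OF Uc c uc]) (use j mn in auto)
      hence "unit_vec m j \<bullet> c = 0" using ue z0 uc[of j] j mn unfolding z_def Ut_def by simp
      thus "c $ j = 0\<^sub>v m $ j" using c j by simp
    qed (use c in simp)
  qed
  have "det T \<noteq> 0"
    using Tker det_0_iff_vec_prod_zero_field[OF Tc] by blast
  from det_non_zero_imp_unit[OF Tc this, of "()"]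
  obtain T0 where T0: "T0 \<in> carrier_mat m m" "T * T0 = 1\<^sub>m m" "T0 * T = 1\<^sub>m m"
    unfolding Units_def ring_mat_def by auto
  have "\<exists>B. B \<in> carrier_mat (dim_row T) (dim_row T) \<and> T * B = 1\<^sub>m (dim_row T) \<and> B * T = 1\<^sub>m (dim_row T)"
    using T0 Tc by (intro exI[of _ T0]) auto
  from someI_ex[OF this] have Ti: "Ti \<in> carrier_mat m m" "T * Ti = 1\<^sub>m m"
    using Tc unfolding Ti_def minv_def by auto
  have key: "Ut *\<^sub>v (Wi *\<^sub>v (U *\<^sub>v (Ti *\<^sub>v c))) = c" if c: "c \<in> carrier_vec m" for c
  proof -
    have "Ut *\<^sub>v (Wi *\<^sub>v (U *\<^sub>v (Ti *\<^sub>v c))) = T *\<^sub>v (Ti *\<^sub>v c)" using Tv Ti c by simp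
    also have "\<dots> = (T * Ti) *\<^sub>v c" by (simp only: assoc_mult_mat_vec[OF Tc Ti(1) c])
    also have "\<dots> = c" unfolding Ti(2) using c by simp
    finally show ?thesis .
  qed

  have un': "constrained_max M SB SW (u ` {..<m}) (u m)" using un unfolding m_def .
  have Pc: "P \<in> carrier_mat M M" unfolding P_def using SBc Uc Ti Bc by auto
  have Bv: "B *\<^sub>v x = Ut *\<^sub>v (Wi *\<^sub>v (SB *\<^sub>v x))" if x: "x \<in> carrier_vec M" for x
  proof -
    have "Wi * SB \<in> carrier_mat M M" using Wi(1) SBc by (rule mult_carrier_mat)
    hence "Ut * (Wi * SB) *\<^sub>v x = Ut *\<^sub>v ((Wi * SB) *\<^sub>v x)" by (rule assoc_mult_mat_vec[OF Utc _ x])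
    also have "(Wi * SB) *\<^sub>v x = Wi *\<^sub>v (SB *\<^sub>v x)" by (rule assoc_mult_mat_vec[OF Wi(1) SBc x])
    finally show ?thesis unfolding Beq .
  qed
  have Pv: "P *\<^sub>v x = SB *\<^sub>v x - U *\<^sub>v (Ti *\<^sub>v (Ut *\<^sub>v (Wi *\<^sub>v (SB *\<^sub>v x))))"
    if x: "x \<in> carrier_vec M" for x
  proof -
    have c1: "U * Ti * B \<in> carrier_mat M M" using Uc Ti Bc by auto
    have "P *\<^sub>v x = SB *\<^sub>v x - (U * Ti * B) *\<^sub>v x" unfolding P_def
      by (rule minus_mult_distrib_mat_vec[OF SBc c1 x])
    also have "(U * Ti * B) *\<^sub>v x = U *\<^sub>v (Ti *\<^sub>v (B *\<^sub>v x))"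
    proof -
      have "U * Ti \<in> carrier_mat M m" using Uc Ti(1) by (rule mult_carrier_mat)
      hence "(U * Ti * B) *\<^sub>v x = (U * Ti) *\<^sub>v (B *\<^sub>v x)" by (rule assoc_mult_mat_vec[OF _ Bc x])
      also have "\<dots> = U *\<^sub>v (Ti *\<^sub>v (B *\<^sub>v x))" by (rule assoc_mult_mat_vec[OF Uc Ti(1)]) (use Bc in simp)
      finally show ?thesis .
    qed
    finally show ?thesis using Bv[OF x] by simp
  qed
  have F1: "Ut *\<^sub>v (Wi *\<^sub>v (P *\<^sub>v x)) = 0\<^sub>v m" if x: "x \<in> carrier_vec M" for x
  proof -
    define g where "g = Ut *\<^sub>v (Wi *\<^sub>v (SB *\<^sub>v x))"
    have gc: "g \<in> carrier_vec m" unfolding g_def using Utc by simp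
    have c2: "U *\<^sub>v (Ti *\<^sub>v g) \<in> carrier_vec M" using Uc by simp
    have c3: "SB *\<^sub>v x \<in> carrier_vec M" using SBc by simp
    have "Wi *\<^sub>v (P *\<^sub>v x) = Wi *\<^sub>v (SB *\<^sub>v x) - Wi *\<^sub>v (U *\<^sub>v (Ti *\<^sub>v g))"
      unfolding Pv[OF x] g_def[symmetric] by (rule mult_minus_distrib_mat_vec[OF Wi(1) c3 c2])
    hence "Ut *\<^sub>v (Wi *\<^sub>v (P *\<^sub>v x)) = Ut *\<^sub>v (Wi *\<^sub>v (SB *\<^sub>v x)) - Ut *\<^sub>v (Wi *\<^sub>v (U *\<^sub>v (Ti *\<^sub>v g)))"
      using mult_minus_distrib_mat_vec[OF Utc, of "Wi *\<^sub>v (SB *\<^sub>v x)" "Wi *\<^sub>v (U *\<^sub>v (Ti *\<^sub>v g))"] Wi by simp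
    also have "\<dots> = g - g" by (simp only: key[OF gc] g_def[symmetric])
    also have "\<dots> = 0\<^sub>v m" using gc by (intro eq_vecI) auto
    finally show ?thesis .
  qed
  define v0 where "v0 = u m"
  have v0c: "v0 \<in> carrier_vec M" and v0nz: "v0 \<noteq> 0\<^sub>v M"
    using un' unfolding constrained_max_def v0_def by auto
  have Ut0v: "Ut *\<^sub>v v0 = 0\<^sub>v m" using Ut0[OF v0c] v0perp unfolding v0_def by auto
  define lam where "lam = rayleigh SB SW v0"
  define a0 where "a0 = v0 \<bullet> (SB *\<^sub>v v0)"
  define b0 where "b0 = v0 \<bullet> (SW *\<^sub>v v0)"
  have b0: "b0 > 0" unfolding b0_def using pdW[OF v0c v0nz] .
  have a0: "a0 = lam * b0" unfolding lam_def rayleigh_def a0_def[symmetric] b0_def[symmetric] using b0 by simp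
  have lam0: "lam \<ge> 0" unfolding lam_def rayleigh_def using psdB[OF v0c] b0 unfolding b0_def by simp
  have stat: "w \<bullet> (SB *\<^sub>v v0) = lam * (w \<bullet> (SW *\<^sub>v v0))"
    if w: "w \<in> carrier_vec M" and wp: "Ut *\<^sub>v w = 0\<^sub>v m" for w
  proof -
    define p where "p = w \<bullet> (SB *\<^sub>v v0)"
    define q where "q = w \<bullet> (SB *\<^sub>v w)"
    define r where "r = w \<bullet> (SW *\<^sub>v v0)"
    define s where "s = w \<bullet> (SW *\<^sub>v w)"
    have wperp: "\<forall>i<m. w \<bullet> u i = 0" using Ut0[OF w] wp by simp
    have ineq: "2*t*(p - lam*r) + t^2*(q - lam*s) \<le> 0" for t
    proof -
      define v where "v = v0 + t \<cdot>\<^sub>v w"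
      have vc: "v \<in> carrier_vec M" unfolding v_def using v0c w by simp
      have vperp: "\<forall>x\<in>u ` {..<m}. v \<bullet> x = 0"
      proof
        fix x assume "x \<in> u ` {..<m}"
        then obtain i where i: "i < m" "x = u i" by auto
        have uic: "u i \<in> carrier_vec M" using uc i mn by auto
        have "v \<bullet> u i = v0 \<bullet> u i + t * (w \<bullet> u i)"
          unfolding v_def using v0c w uic by (simp add: add_scalar_prod_distrib[of _ M])
        thus "v \<bullet> x = 0" using wperp v0perp i unfolding v0_def by simp
      qed
      have le: "v \<bullet> (SB *\<^sub>v v) \<le> lam * (v \<bullet> (SW *\<^sub>v v))"
      proof (cases "v = 0\<^sub>v M")
        case True
        thus ?thesis using SBc SWc by simp
      next
        case False
        have "rayleigh SB SW v \<le> lam" using un' vc False vperp unfolding constrained_max_def lam_def v0_def by blast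
        moreover have "v \<bullet> (SW *\<^sub>v v) > 0" using pdW[OF vc False] .
        ultimately show ?thesis unfolding rayleigh_def by (simp add: pos_divide_le_eq)
      qed
      have eB: "v \<bullet> (SB *\<^sub>v v) = a0 + 2*t*p + t^2*q"
        unfolding v_def a0_def p_def q_def by (rule expand_form[OF SBc symB v0c w])
      have eW: "v \<bullet> (SW *\<^sub>v v) = b0 + 2*t*r + t^2*s"
        unfolding v_def b0_def r_def s_def by (rule expand_form[OF SWc symW v0c w])
      have "2*t*(p - lam*r) + t^2*(q - lam*s) = (a0 + 2*t*p + t^2*q) - lam*(b0 + 2*t*r + t^2*s)"
        using a0 by (simp add: algebra_simps)
      moreover have "a0 + 2*t*p + t^2*q \<le> lam * (b0 + 2*t*r + t^2*s)" using le unfolding eB eW .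
      ultimately show ?thesis by linarith
    qed
    have "p - lam*r = 0" using quad_zero ineq by blast
    thus ?thesis unfolding p_def r_def by simp
  qed
  have F2: "P *\<^sub>v v0 = lam \<cdot>\<^sub>v (SW *\<^sub>v v0)"
  proof -
    define g where "g = Ut *\<^sub>v (Wi *\<^sub>v (SB *\<^sub>v v0))"
    define z where "z = P *\<^sub>v v0 - lam \<cdot>\<^sub>v (SW *\<^sub>v v0)"
    define w where "w = Wi *\<^sub>v z"
    have gc: "g \<in> carrier_vec m" unfolding g_def using Utc by simp
    have zc: "z \<in> carrier_vec M" unfolding z_def using Pc SWc by simp
    have wc: "w \<in> carrier_vec M" unfolding w_def using Wi by simp
    have c4: "P *\<^sub>v v0 \<in> carrier_vec M" "SW *\<^sub>v v0 \<in> carrier_vec M" "SB *\<^sub>v v0 \<in> carrier_vec M"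
      using Pc SWc SBc by auto
    have "w = Wi *\<^sub>v (P *\<^sub>v v0) - Wi *\<^sub>v (lam \<cdot>\<^sub>v (SW *\<^sub>v v0))"
      unfolding w_def z_def by (rule mult_minus_distrib_mat_vec[OF Wi(1)]) (use c4 in auto)
    also have "Wi *\<^sub>v (lam \<cdot>\<^sub>v (SW *\<^sub>v v0)) = lam \<cdot>\<^sub>v v0"
      using mult_mat_vec[OF Wi(1) c4(2)] WiSW[OF v0c] by simp
    finally have weq: "w = Wi *\<^sub>v (P *\<^sub>v v0) - lam \<cdot>\<^sub>v v0" .
    have "Ut *\<^sub>v w = Ut *\<^sub>v (Wi *\<^sub>v (P *\<^sub>v v0)) - Ut *\<^sub>v (lam \<cdot>\<^sub>v v0)"
      unfolding weq by (rule mult_minus_distrib_mat_vec[OF Utc]) (use Wi v0c in auto)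
    also have "Ut *\<^sub>v (lam \<cdot>\<^sub>v v0) = lam \<cdot>\<^sub>v (Ut *\<^sub>v v0)" by (rule mult_mat_vec[OF Utc v0c])
    finally have wp: "Ut *\<^sub>v w = 0\<^sub>v m" unfolding F1[OF v0c] Ut0v by (intro eq_vecI) auto
    have zeq: "z = SW *\<^sub>v w" unfolding w_def using SWWi[OF zc] by simp
    have Pv0: "P *\<^sub>v v0 = SB *\<^sub>v v0 - U *\<^sub>v (Ti *\<^sub>v g)" unfolding g_def by (rule Pv[OF v0c])
    have c5: "U *\<^sub>v (Ti *\<^sub>v g) \<in> carrier_vec M" using Uc by simp
    have "w \<bullet> z = w \<bullet> (P *\<^sub>v v0) - w \<bullet> (lam \<cdot>\<^sub>v (SW *\<^sub>v v0))"
      unfolding z_def by (rule scalar_prod_minus_distrib[OF wc]) (use c4 in auto)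
    also have "w \<bullet> (P *\<^sub>v v0) = w \<bullet> (SB *\<^sub>v v0) - w \<bullet> (U *\<^sub>v (Ti *\<^sub>v g))"
      unfolding Pv0 by (rule scalar_prod_minus_distrib[OF wc c4(3) c5])
    also have "w \<bullet> (U *\<^sub>v (Ti *\<^sub>v g)) = 0" using xperp[OF wc wp] Ti(1) gc by simp
    also have "w \<bullet> (lam \<cdot>\<^sub>v (SW *\<^sub>v v0)) = lam * (w \<bullet> (SW *\<^sub>v v0))" using wc c4 by simp
    finally have wz: "w \<bullet> z = 0" using stat[OF wc wp] by simp
    have "w \<bullet> (SW *\<^sub>v w) = 0" using wz unfolding zeq .
    hence "w = 0\<^sub>v M" by (rule pdW0[OF wc])
    hence z0: "z = 0\<^sub>v M" using zeq mat_vec_zero[OF SWc] by simp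
    show ?thesis
    proof (rule eq_vecI)
      fix i assume "i < dim_vec (lam \<cdot>\<^sub>v (SW *\<^sub>v v0))"
      hence i: "i < M" using SWc by simp
      have "z $ i = 0" using z0 i by simp
      have d: "i < dim_vec (lam \<cdot>\<^sub>v (SW *\<^sub>v v0))" using SWc i by simp
      have "(P *\<^sub>v v0) $ i - (lam \<cdot>\<^sub>v (SW *\<^sub>v v0)) $ i = 0"
        using \<open>z $ i = 0\<close> index_minus_vec(1)[OF d, of "P *\<^sub>v v0"] unfolding z_def by simp
      thus "(P *\<^sub>v v0) $ i = (lam \<cdot>\<^sub>v (SW *\<^sub>v v0)) $ i" by linarith
    qed (use Pc SWc in simp)
  qed
  have emax: "mu \<le> lam" if ep: "gen_eigenpair M P SW mu v" for mu v
  proof (rule ccontr)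
    assume "\<not> mu \<le> lam"
    hence mu: "mu > 0" using lam0 by simp
    have vc: "v \<in> carrier_vec M" and vnz: "v \<noteq> 0\<^sub>v M" and Pvv: "P *\<^sub>v v = mu \<cdot>\<^sub>v (SW *\<^sub>v v)"
      using ep unfolding gen_eigenpair_def by auto
    have c6: "SW *\<^sub>v v \<in> carrier_vec M" using SWc by simp
    have "Ut *\<^sub>v (Wi *\<^sub>v (P *\<^sub>v v)) = Ut *\<^sub>v (mu \<cdot>\<^sub>v v)"
      unfolding Pvv mult_mat_vec[OF Wi(1) c6] WiSW[OF vc] ..
    also have "\<dots> = mu \<cdot>\<^sub>v (Ut *\<^sub>v v)" by (rule mult_mat_vec[OF Utc vc])
    finally have h: "mu \<cdot>\<^sub>v (Ut *\<^sub>v v) = 0\<^sub>v m" unfolding F1[OF vc] by (rule sym)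
    have vp: "Ut *\<^sub>v v = 0\<^sub>v m"
    proof -
      show ?thesis
      proof (rule eq_vecI)
        fix i assume "i < dim_vec (0\<^sub>v m :: real vec)"
        hence i: "i < m" by simp
        have "(mu \<cdot>\<^sub>v (Ut *\<^sub>v v)) $ i = (0\<^sub>v m :: real vec) $ i" using h by (rule arg_cong)
        hence "mu * (Ut *\<^sub>v v) $ i = 0" using i Utc by (simp del: index_mult_mat_vec)
        thus "(Ut *\<^sub>v v) $ i = 0\<^sub>v m $ i" using i mu by (simp del: index_mult_mat_vec)
      qed (use Utc in simp)
    qed
    have c7: "SB *\<^sub>v v \<in> carrier_vec M" "U *\<^sub>v (Ti *\<^sub>v (Ut *\<^sub>v (Wi *\<^sub>v (SB *\<^sub>v v)))) \<in> carrier_vec M"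
      using SBc Uc by auto
    have "v \<bullet> (P *\<^sub>v v) = v \<bullet> (SB *\<^sub>v v) - v \<bullet> (U *\<^sub>v (Ti *\<^sub>v (Ut *\<^sub>v (Wi *\<^sub>v (SB *\<^sub>v v)))))"
      unfolding Pv[OF vc] by (rule scalar_prod_minus_distrib[OF vc c7])
    also have "v \<bullet> (U *\<^sub>v (Ti *\<^sub>v (Ut *\<^sub>v (Wi *\<^sub>v (SB *\<^sub>v v))))) = 0"
      using xperp[OF vc vp] Ti(1) Utc by simp
    finally have "v \<bullet> (SB *\<^sub>v v) = mu * (v \<bullet> (SW *\<^sub>v v))" using Pvv vc c6 by simp
    moreover have bv: "v \<bullet> (SW *\<^sub>v v) > 0" using pdW[OF vc vnz] .
    ultimately have "rayleigh SB SW v = mu" unfolding rayleigh_def by simp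
    moreover have "\<forall>x\<in>u ` {..<m}. v \<bullet> x = 0" using Ut0[OF vc] vp by auto
    hence "rayleigh SB SW v \<le> lam" using un' vc vnz unfolding constrained_max_def lam_def v0_def by blast
    ultimately show False using \<open>\<not> mu \<le> lam\<close> by simp
  qed
  have main: "largest_gen_eigvec M P SW v0"
    unfolding largest_gen_eigvec_def
  proof (intro exI conjI allI impI)
    show "gen_eigenpair M P SW lam v0" unfolding gen_eigenpair_def using v0c v0nz F2 by simp
    fix mu' w assume "gen_eigenpair M P SW mu' w"
    thus "mu' \<le> lam" by (rule emax)
  qed
  show ?thesis
    using main unfolding Let_def P_def U_def B_def T_def Ti_def Wi_def v0_def m_def .
qed

end
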